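(* Let $X\subseteq\mathbb{R}^N$ be a closed convex set with $0\notin X$, let $p\in[e^{-1},1)$, and let $\kappa$ be twice differentiable with $0<\kappa(x)\le1$ for all $x\in X$. Define $U(x,y):=\psi_x^{-1}(y\,\psi_x(p))=p^{\,y^{\kappa(x)}}$ for $(x,y)\in X\times(0,1)$, where $\psi_x(t)=(-\ln t)^{1/\kappa(x)}$. Let $d>0$ be a constant with $1/\omega(x,y)\ge d\,\kappa(x)$ for all $(x,y)\in X\times(0,1)$, and assume that $d\,\kappa(x)\nabla^2\kappa(x)-\nabla\kappa(x)\nabla\kappa(x)^T$ is positive semidefinite for every $x\in X$. Then $U$ is jointly convex on $X\times(0,1)$. If moreover $d\,\kappa(x)\nabla^2\kappa(x)-\nabla\kappa(x)\nabla\kappa(x)^T$ is positive definite for every $x\in X$, then $U$ is strictly convex on $X\times(0,1)$.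
   Context: $\omega=\varphi_2/\varphi_1$ where $\varphi_1(x,y)=\kappa(x)\ln y[\kappa(x)-1+\kappa(x)\ln p\,y^{\kappa(x)}]$ and $\varphi_2(x,y)=\kappa(x)(\ln y)^2(1+\ln p\,y^{\kappa(x)})[1-\kappa(x)-\kappa(x)\ln p\,y^{\kappa(x)}]+(1+\kappa(x)\ln y+\ln p\ln y\,y^{\kappa(x)}\kappa(x))^2$. $\nabla^2\kappa$ and $\nabla\kappa$ denote the Hessian and gradient of $\kappa$. *)

theory Defs
  imports "HOL-Analysis.Analysis"
begin

definition strict_convex_on :: "'a::real_vector set \<Rightarrow> ('a \<Rightarrow> real) \<Rightarrow> bool"
  where "strict_convex_on S f \<longleftrightarrow> convex S \<and>
    (\<forall>x\<in>S. \<forall>y\<in>S. \<forall>t. x \<noteq> y \<longrightarrow> 0 < t \<longrightarrow> t < 1 \<longrightarrow>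
       f ((1 - t) *\<^sub>R x + t *\<^sub>R y) < (1 - t) * f x + t * f y)"

definition psd_mat :: "real^'n^'n \<Rightarrow> bool"
  where "psd_mat A \<longleftrightarrow> (\<forall>v. 0 \<le> v \<bullet> (A *v v))"

definition pd_mat :: "real^'n^'n \<Rightarrow> bool"
  where "pd_mat A \<longleftrightarrow> (\<forall>v. v \<noteq> 0 \<longrightarrow> 0 < v \<bullet> (A *v v))"

definition outer_prod :: "real^'n \<Rightarrow> real^'n \<Rightarrow> real^'n^'n"
  where "outer_prod g h = (\<chi> i j. g $ i * h $ j)"

definition psi :: "real \<Rightarrow> real \<Rightarrow> real"
  where "psi k t = (- ln t) powr (1 / k)"

text \<open>U(x,y) = p^(y^kappa(x)), with k = kappa(x).\<close>
definition Ufun :: "real \<Rightarrow> real \<Rightarrow> real \<Rightarrow> real"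
  where "Ufun p k y = p powr (y powr k)"

text \<open>phi_1, phi_2, omega as functions of k = kappa(x), p and y.\<close>
definition phi1 :: "real \<Rightarrow> real \<Rightarrow> real \<Rightarrow> real"
  where "phi1 p k y = k * ln y * (k - 1 + k * ln p * y powr k)"

definition phi2 :: "real \<Rightarrow> real \<Rightarrow> real \<Rightarrow> real"
  where "phi2 p k y = k * (ln y)\<^sup>2 * (1 + ln p * y powr k) * (1 - k - k * ln p * y powr k)
                      + (1 + k * ln y + ln p * ln y * y powr k * k)\<^sup>2"

definition omega :: "real \<Rightarrow> real \<Rightarrow> real \<Rightarrow> real"
  where "omega p k y = phi2 p k y / phi1 p k y"

end

theory Submission
  imports Defs
begin

lemma oneD_aux:
  fixes g g1 g2 :: "real \<Rightarrow> real"
  assumes d1: "\<And>t. 0 \<le> t \<Longrightarrow> t \<le> 1 \<Longrightarrow> (g has_real_derivative g1 t) (at t)"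
    and t: "0 < t" "t < 1"
  shows "\<exists>a b. 0 < a \<and> a < t \<and> t < b \<and> b < 1 \<and>
     (1 - t) * g 0 + t * g 1 - g t = t * (1 - t) * (g1 b - g1 a)"
proof -
  obtain a where a: "0 < a" "a < t" "g t - g 0 = (t - 0) * g1 a"
    using MVT2[of 0 t g g1] d1 t by auto
  obtain b where b: "t < b" "b < 1" "g 1 - g t = (1 - t) * g1 b"
    using MVT2[of t 1 g g1] d1 t by auto
  have "(1 - t) * g 0 + t * g 1 - g t = t * ((g 1 - g t)) - (1 - t) * (g t - g 0)"
    by (simp add: algebra_simps)
  also have "\<dots> = t * ((1 - t) * g1 b) - (1 - t) * (t * g1 a)" using a(3) b(3) by simp
  also have "\<dots> = t * (1 - t) * (g1 b - g1 a)" by (simp add: algebra_simps)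
  finally show ?thesis using a b by blast
qed

lemma oneD_convex:
  fixes g g1 g2 :: "real \<Rightarrow> real"
  assumes d1: "\<And>t. 0 \<le> t \<Longrightarrow> t \<le> 1 \<Longrightarrow> (g has_real_derivative g1 t) (at t)"
    and d2: "\<And>t. 0 \<le> t \<Longrightarrow> t \<le> 1 \<Longrightarrow> (g1 has_real_derivative g2 t) (at t)"
    and nn: "\<And>t. 0 \<le> t \<Longrightarrow> t \<le> 1 \<Longrightarrow> 0 \<le> g2 t"
    and t: "0 < t" "t < 1"
  shows "g t \<le> (1 - t) * g 0 + t * g 1"
proof -
  obtain a b where ab: "0 < a" "a < t" "t < b" "b < 1"
     "(1 - t) * g 0 + t * g 1 - g t = t * (1 - t) * (g1 b - g1 a)"
    using oneD_aux[OF d1 t] by blast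
  have "g1 a \<le> g1 b"
  proof (rule DERIV_nonneg_imp_increasing_open[of a b g1])
    show "a \<le> b" using ab by simp
    show "\<And>x. a < x \<Longrightarrow> x < b \<Longrightarrow> \<exists>y. (g1 has_real_derivative y) (at x) \<and> 0 \<le> y"
      using d2 nn ab by (meson less_le_not_le less_trans order.strict_implies_order)
    show "continuous_on {a..b} g1"
    proof (intro continuous_at_imp_continuous_on ballI)
      fix x assume "x \<in> {a..b}"
      then have "0 \<le> x" "x \<le> 1" using ab by auto
      then show "isCont g1 x" by (rule DERIV_isCont[OF d2])
    qed
  qed
  then have "0 \<le> t * (1 - t) * (g1 b - g1 a)" using t by simp
  then show ?thesis using ab(5) by linarith
qed

lemma oneD_strict:
  fixes g g1 g2 :: "real \<Rightarrow> real"
  assumes d1: "\<And>t. 0 \<le> t \<Longrightarrow> t \<le> 1 \<Longrightarrow> (g has_real_derivative g1 t) (at t)"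
    and d2: "\<And>t. 0 \<le> t \<Longrightarrow> t \<le> 1 \<Longrightarrow> (g1 has_real_derivative g2 t) (at t)"
    and nn: "\<And>t. 0 \<le> t \<Longrightarrow> t \<le> 1 \<Longrightarrow> 0 < g2 t"
    and t: "0 < t" "t < 1"
  shows "g t < (1 - t) * g 0 + t * g 1"
proof -
  obtain a b where ab: "0 < a" "a < t" "t < b" "b < 1"
     "(1 - t) * g 0 + t * g 1 - g t = t * (1 - t) * (g1 b - g1 a)"
    using oneD_aux[OF d1 t] by blast
  have "g1 a < g1 b"
  proof (rule DERIV_pos_imp_increasing[of a b g1])
    show "a < b" using ab by simp
    show "\<And>x. a \<le> x \<Longrightarrow> x \<le> b \<Longrightarrow> \<exists>y. (g1 has_real_derivative y) (at x) \<and> 0 < y"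
      using d2 nn ab by (meson less_le_not_le order_trans order.strict_implies_order)
  qed
  then have "0 < t * (1 - t) * (g1 b - g1 a)" using t by simp
  then show ?thesis using ab(5) by linarith
qed

lemma quad_matrix:
  fixes Hm :: "real^'n^'n" and g v :: "real^'n"
  shows "v \<bullet> ((c *\<^sub>R Hm - (\<chi> i j. g $ i * g $ j)) *v v) = c * (v \<bullet> (Hm *v v)) - (g \<bullet> v)\<^sup>2"
proof -
  have "(\<chi> i j. g $ i * g $ j) *v v = (g \<bullet> v) *\<^sub>R g"
    by (simp add: matrix_vector_mult_def inner_vec_def vec_eq_iff sum_distrib_left mult.commute mult.left_commute)
  then show ?thesis
    by (simp add: matrix_vector_mult_diff_rdistrib inner_diff_right power2_eq_square
        scaleR_matrix_vector_assoc[symmetric] inner_commute)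
qed


lemma alg_key:
  fixes p k y d H s t :: real
  assumes p: "0 < p" "p < 1" and k: "0 < k" "k \<le> 1" and y: "0 < y" "y < 1"
    and d: "0 < d" and db: "1 / omega p k y \<ge> d * k" and ps: "s\<^sup>2 \<le> d * k * H"
  defines "E \<equiv> (- ln p * y powr k - 1) * (s * ln y + k * t)\<^sup>2 - H * ln y - 2 * s * t + k * t\<^sup>2"
  shows "0 \<le> E \<and> ((s\<^sup>2 < d * k * H \<or> (s = 0 \<and> H = 0 \<and> t \<noteq> 0)) \<longrightarrow> 0 < E)"
proof -
  define lp where "lp = ln p"
  define G where "G = y powr k"
  define L where "L = ln y"
  have lp: "lp < 0" using p by (simp add: lp_def)
  have G: "G > 0" using y by (simp add: G_def)
  have L: "L < 0" using y by (simp add: L_def)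
  define B where "B = 1 - k - k * lp * G"
  have "k * lp * G < 0" using k lp G by (simp add: mult_pos_neg mult_neg_pos)
  then have B: "B > 0" using k by (simp add: B_def)
  define c where "c = - lp * G * k * L - k * L - 1"
  have phi1: "phi1 p k y = - k * L * B"
    by (simp add: phi1_def B_def L_def lp_def G_def algebra_simps)
  have phi2: "phi2 p k y = k * L\<^sup>2 * (1 + lp * G) * B + c\<^sup>2"
    by (simp add: phi2_def B_def L_def lp_def G_def c_def power2_eq_square algebra_simps)
  have E: "E = (- lp * G - 1) * (s * L + k * t)\<^sup>2 - H * L - 2 * s * t + k * t\<^sup>2"
    by (simp add: E_def lp_def G_def L_def)
  have ident: "k * B * E = phi1 p k y * H - phi2 p k y * s\<^sup>2 + (k * B * t + c * s)\<^sup>2"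
    unfolding phi1 phi2 E B_def c_def by (simp add: power2_eq_square algebra_simps)
  have kB: "k * B > 0" using k B by simp
  have P1: "phi1 p k y > 0" using phi1 k L B by (simp add: mult_neg_pos mult_pos_neg)
  have om: "omega p k y > 0"
  proof (rule ccontr)
    assume "\<not> omega p k y > 0"
    then have "1 / omega p k y \<le> 0" by simp
    then show False using db d k by (smt (verit) mult_pos_pos)
  qed
  then have P2: "phi2 p k y > 0" using P1 by (simp add: omega_def zero_less_divide_iff)
  have "1 / omega p k y = phi1 p k y / phi2 p k y" by (simp add: omega_def)
  then have "d * k * phi2 p k y \<le> phi1 p k y" using db P2 by (simp add: le_divide_eq)
  then have a1: "d * k * phi2 p k y * s\<^sup>2 \<le> phi1 p k y * s\<^sup>2" by (simp add: mult_right_mono)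
  have a2: "phi1 p k y * s\<^sup>2 \<le> phi1 p k y * (d * k * H)" using ps P1 by (simp add: mult_left_mono)
  have dk: "d * k > 0" using d k by simp
  have "d * k * (phi1 p k y * H - phi2 p k y * s\<^sup>2) \<ge> 0"
    using a1 a2 by (simp add: algebra_simps)
  then have M: "phi1 p k y * H - phi2 p k y * s\<^sup>2 \<ge> 0" using dk by (simp add: zero_le_mult_iff)
  have "k * B * E \<ge> 0" using ident M by (smt (verit) zero_le_power2)
  then have E0: "0 \<le> E" using kB by (simp add: zero_le_mult_iff)
  have "0 < E" if cond: "s\<^sup>2 < d * k * H \<or> (s = 0 \<and> H = 0 \<and> t \<noteq> 0)"
  proof -
    have "k * B * E > 0"
    proof (cases "s\<^sup>2 < d * k * H")
      case True
      have "phi1 p k y * s\<^sup>2 < phi1 p k y * (d * k * H)" using True P1 by simp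
      then have "d * k * (phi1 p k y * H - phi2 p k y * s\<^sup>2) > 0"
        using a1 by (simp add: algebra_simps)
      then have "phi1 p k y * H - phi2 p k y * s\<^sup>2 > 0" using dk by (simp add: zero_less_mult_iff)
      then show ?thesis using ident by (smt (verit) zero_le_power2)
    next
      case False
      then have "s = 0" "H = 0" "t \<noteq> 0" using cond by auto
      then show ?thesis using ident kB k B by simp
    qed
    then show ?thesis using kB by (simp add: zero_less_mult_iff)
  qed
  then show ?thesis using E0 by blast
qed


lemma seg_claim:
  fixes X :: "(real^'n) set" and S :: "(real^'n) set"
    and \<kappa> :: "real^'n \<Rightarrow> real"
    and grad\<kappa> :: "real^'n \<Rightarrow> real^'n"
    and hess\<kappa> :: "real^'n \<Rightarrow> real^'n^'n"
    and p d :: real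
  assumes X_convex: "convex X"
    and p_range: "exp (-1) \<le> p" "p < 1"
    and X_S: "X \<subseteq> S"
    and grad: "\<And>x. x \<in> S \<Longrightarrow> (\<kappa> has_derivative (\<lambda>h. grad\<kappa> x \<bullet> h)) (at x)"
    and hess: "\<And>x. x \<in> S \<Longrightarrow> (grad\<kappa> has_derivative (\<lambda>h. hess\<kappa> x *v h)) (at x)"
    and \<kappa>_range: "\<And>x. x \<in> X \<Longrightarrow> 0 < \<kappa> x \<and> \<kappa> x \<le> 1"
    and d_pos: "d > 0"
    and d_bound: "\<And>x y. x \<in> X \<Longrightarrow> 0 < y \<Longrightarrow> y < 1 \<Longrightarrow>
                    1 / omega p (\<kappa> x) y \<ge> d * \<kappa> x"
    and psd: "\<And>x. x \<in> X \<Longrightarrow>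
                psd_mat ((d * \<kappa> x) *\<^sub>R hess\<kappa> x - outer_prod (grad\<kappa> x) (grad\<kappa> x))"
    and x0: "x0 \<in> X" and x1: "x1 \<in> X" and y0: "0 < y0" "y0 < 1" and y1: "0 < y1" "y1 < 1"
    and t: "0 < t" "t < 1"
  shows "Ufun p (\<kappa> ((1 - t) *\<^sub>R x0 + t *\<^sub>R x1)) ((1 - t) * y0 + t * y1)
           \<le> (1 - t) * Ufun p (\<kappa> x0) y0 + t * Ufun p (\<kappa> x1) y1 \<and>
         ((\<forall>x\<in>X. pd_mat ((d * \<kappa> x) *\<^sub>R hess\<kappa> x - outer_prod (grad\<kappa> x) (grad\<kappa> x)))
            \<and> (x0 \<noteq> x1 \<or> y0 \<noteq> y1) \<longrightarrow>
          Ufun p (\<kappa> ((1 - t) *\<^sub>R x0 + t *\<^sub>R x1)) ((1 - t) * y0 + t * y1)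
           < (1 - t) * Ufun p (\<kappa> x0) y0 + t * Ufun p (\<kappa> x1) y1)"
proof -
  have p0: "0 < p" using p_range(1) exp_gt_zero[of "-1"] by linarith
  define v where "v = x1 - x0"
  define w where "w = y1 - y0"
  define xt where "xt = (\<lambda>s::real. x0 + s *\<^sub>R v)"
  define yt where "yt = (\<lambda>s::real. y0 + s * w)"
  define K where "K = (\<lambda>s. \<kappa> (xt s))"
  define Kd where "Kd = (\<lambda>s. grad\<kappa> (xt s) \<bullet> v)"
  define Kdd where "Kdd = (\<lambda>s. v \<bullet> (hess\<kappa> (xt s) *v v))"
  define G0 where "G0 = (\<lambda>s. exp (exp (K s * ln (yt s)) * ln p))"
  define g1 where "g1 = (\<lambda>s. G0 s * (exp (K s * ln (yt s)) * (Kd s * ln (yt s) + K s * (w / yt s)) * ln p))"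
  define g2 where "g2 = (\<lambda>s. G0 s * ((ln p * exp (K s * ln (yt s)) * (Kd s * ln (yt s) + K s * (w / yt s)))\<^sup>2
      + ln p * exp (K s * ln (yt s)) * ((Kd s * ln (yt s) + K s * (w / yt s))\<^sup>2
          + (Kdd s * ln (yt s) + 2 * Kd s * (w / yt s) - K s * (w / yt s)\<^sup>2))))"
  have xtX: "xt s \<in> X" if "0 \<le> s" "s \<le> 1" for s
  proof -
    have "xt s = (1 - s) *\<^sub>R x0 + s *\<^sub>R x1" by (simp add: xt_def v_def algebra_simps)
    then show ?thesis using convexD[OF X_convex x0 x1, of "1 - s" s] that by simp
  qed
  have yt01: "0 < yt s \<and> yt s < 1" if "0 \<le> s" "s \<le> 1" for s
  proof -
    have e: "yt s = (1 - s) * y0 + s * y1" by (simp add: yt_def w_def algebra_simps)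
    have "0 < (1 - s) * y0 + s * y1"
      using that y0 y1 by (cases "s = 1") (auto intro: add_pos_nonneg add_nonneg_pos)
    moreover have "(1 - s) * y0 + s * y1 < 1"
    proof -
      have "(1 - s) * y0 \<le> (1 - s) * 1" using that y0 by (intro mult_left_mono) auto
      moreover have "s * y1 \<le> s * 1" using that y1 by (intro mult_left_mono) auto
      moreover have "(1 - s) * y0 < (1 - s) * 1 \<or> s * y1 < s * 1"
        using that y0 y1 by (cases "s = 1") auto
      moreover have "(1 - s) * 1 + s * 1 = (1::real)" by simp
      ultimately show ?thesis by linarith
    qed
    ultimately show ?thesis using e by simp
  qed
  have xder: "(xt has_derivative (\<lambda>h. h *\<^sub>R v)) (at s)" for s
    unfolding xt_def by (rule derivative_eq_intros refl | simp)+
  have DK: "(K has_real_derivative Kd s) (at s)" if "0 \<le> s" "s \<le> 1" for s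
  proof -
    have xS: "xt s \<in> S" using xtX[OF that] X_S by blast
    have "((\<lambda>s. \<kappa> (xt s)) has_derivative (\<lambda>h. grad\<kappa> (xt s) \<bullet> (h *\<^sub>R v))) (at s)"
      by (rule has_derivative_compose[OF xder grad[OF xS]])
    then show ?thesis unfolding has_field_derivative_def K_def Kd_def
      by (rule has_derivative_eq_rhs) (simp add: fun_eq_iff)
  qed
  have DKd: "(Kd has_real_derivative Kdd s) (at s)" if "0 \<le> s" "s \<le> 1" for s
  proof -
    have xS: "xt s \<in> S" using xtX[OF that] X_S by blast
    have "((\<lambda>s. grad\<kappa> (xt s)) has_derivative (\<lambda>h. hess\<kappa> (xt s) *v (h *\<^sub>R v))) (at s)"
      by (rule has_derivative_compose[OF xder hess[OF xS]])
    from bounded_linear.has_derivative[OF bounded_linear_inner_left this]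
    have "((\<lambda>s. grad\<kappa> (xt s) \<bullet> v) has_derivative (\<lambda>h. (hess\<kappa> (xt s) *v (h *\<^sub>R v)) \<bullet> v)) (at s)" .
    then show ?thesis unfolding has_field_derivative_def Kdd_def Kd_def
      by (rule has_derivative_eq_rhs) (simp add: fun_eq_iff matrix_vector_mult_scaleR inner_commute)
  qed
  have Dy: "(yt has_real_derivative w) (at s)" for s
    unfolding yt_def by (rule derivative_eq_intros refl | simp)+
  have DG0: "(G0 has_real_derivative g1 s) (at s)" if "0 \<le> s" "s \<le> 1" for s
  proof -
    have ys: "0 < yt s" using yt01[OF that] by simp
    show ?thesis unfolding G0_def g1_def
      by (rule derivative_eq_intros DK[OF that] Dy ys refl | simp)+
  qed
  have Dg1: "(g1 has_real_derivative g2 s) (at s)" if "0 \<le> s" "s \<le> 1" for s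
  proof -
    have ys: "0 < yt s" using yt01[OF that] by simp
    show ?thesis unfolding g1_def
      apply (rule derivative_eq_intros DG0[OF that] DK[OF that] DKd[OF that] Dy ys refl)+
      using ys apply (auto intro!: derivative_eq_intros)
      unfolding g2_def g1_def using ys apply (simp add: field_simps power2_eq_square)
      done
  qed
  have g2E: "g2 s = G0 s * (- ln p) * yt s powr K s *
      ((- ln p * yt s powr K s - 1) * (Kd s * ln (yt s) + K s * (w / yt s))\<^sup>2 - Kdd s * ln (yt s)
        - 2 * Kd s * (w / yt s) + K s * (w / yt s)\<^sup>2)" if "0 \<le> s" "s \<le> 1" for s
  proof -
    have ys: "0 < yt s" using yt01[OF that] by simp
    then have e: "yt s powr K s = exp (K s * ln (yt s))" by (simp add: powr_def)
    show ?thesis unfolding g2_def e using ys by (simp add: power2_eq_square field_simps)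
  qed
  have psdK: "(Kd s)\<^sup>2 \<le> d * K s * Kdd s" if "0 \<le> s" "s \<le> 1" for s
  proof -
    have "0 \<le> v \<bullet> (((d * K s) *\<^sub>R hess\<kappa> (xt s) - outer_prod (grad\<kappa> (xt s)) (grad\<kappa> (xt s))) *v v)"
      using psd[OF xtX[OF that]] unfolding psd_mat_def K_def by blast
    then show ?thesis unfolding outer_prod_def quad_matrix Kd_def Kdd_def by simp
  qed
  have Gpos: "0 < G0 s * (- ln p) * yt s powr K s" if "0 \<le> s" "s \<le> 1" for s
  proof -
    have "ln p < 0" using p0 p_range by simp
    moreover have "0 < yt s powr K s" using yt01[OF that] by simp
    moreover have "0 < G0 s" by (simp add: G0_def)
    ultimately show ?thesis by (simp add: mult_pos_neg mult_neg_pos)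
  qed
  have keyE: "0 \<le> g2 s \<and> (((Kd s)\<^sup>2 < d * K s * Kdd s \<or> (Kd s = 0 \<and> Kdd s = 0 \<and> w / yt s \<noteq> 0)) \<longrightarrow> 0 < g2 s)"
    if "0 \<le> s" "s \<le> 1" for s
  proof -
    have kr: "0 < K s" "K s \<le> 1" using \<kappa>_range[OF xtX[OF that]] by (auto simp: K_def)
    have db: "1 / omega p (K s) (yt s) \<ge> d * K s"
      unfolding K_def using d_bound[OF xtX[OF that]] yt01[OF that] by blast
    let ?E = "(- ln p * yt s powr K s - 1) * (Kd s * ln (yt s) + K s * (w / yt s))\<^sup>2 - Kdd s * ln (yt s)
        - 2 * Kd s * (w / yt s) + K s * (w / yt s)\<^sup>2"
    have A: "0 \<le> ?E \<and> (((Kd s)\<^sup>2 < d * K s * Kdd s \<or> (Kd s = 0 \<and> Kdd s = 0 \<and> w / yt s \<noteq> 0)) \<longrightarrow> 0 < ?E)"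
      by (rule alg_key[OF p0 p_range(2) kr yt01[OF that, THEN conjunct1] yt01[OF that, THEN conjunct2]
        d_pos db psdK[OF that]])
    have g: "g2 s = (G0 s * (- ln p) * yt s powr K s) * ?E" by (rule g2E[OF that])
    have C: "0 < G0 s * (- ln p) * yt s powr K s" by (rule Gpos[OF that])
    show ?thesis unfolding g using A C by (meson mult_pos_pos mult_nonneg_nonneg less_imp_le)
  qed
  have Uval: "Ufun p (\<kappa> (xt s)) (yt s) = G0 s" if "0 \<le> s" "s \<le> 1" for s
    using yt01[OF that] p0 by (simp add: Ufun_def G0_def K_def powr_def)
  have e0: "Ufun p (\<kappa> x0) y0 = G0 0" using Uval[of 0] by (simp add: xt_def yt_def)
  have e1: "Ufun p (\<kappa> x1) y1 = G0 1" using Uval[of 1] by (simp add: xt_def yt_def v_def w_def)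
  have et: "Ufun p (\<kappa> ((1 - t) *\<^sub>R x0 + t *\<^sub>R x1)) ((1 - t) * y0 + t * y1) = G0 t"
  proof -
    have "xt t = (1 - t) *\<^sub>R x0 + t *\<^sub>R x1" "yt t = (1 - t) * y0 + t * y1"
      by (simp_all add: xt_def yt_def v_def w_def algebra_simps)
    then show ?thesis using Uval[of t] t by simp
  qed
  have conv: "G0 t \<le> (1 - t) * G0 0 + t * G0 1"
    by (rule oneD_convex[OF DG0 Dg1 _ t]) (use keyE in auto)
  have strict: "G0 t < (1 - t) * G0 0 + t * G0 1"
    if pd: "\<forall>x\<in>X. pd_mat ((d * \<kappa> x) *\<^sub>R hess\<kappa> x - outer_prod (grad\<kappa> x) (grad\<kappa> x))"
      and ne: "x0 \<noteq> x1 \<or> y0 \<noteq> y1"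
  proof (rule oneD_strict[OF DG0 Dg1 _ t])
    fix s :: real assume s: "0 \<le> s" "s \<le> 1"
    show "0 < g2 s"
    proof (cases "v = 0")
      case False
      have "0 < v \<bullet> (((d * K s) *\<^sub>R hess\<kappa> (xt s) - outer_prod (grad\<kappa> (xt s)) (grad\<kappa> (xt s))) *v v)"
        using pd xtX[OF s] False unfolding pd_mat_def K_def by blast
      then have "(Kd s)\<^sup>2 < d * K s * Kdd s"
        unfolding outer_prod_def quad_matrix Kd_def Kdd_def by simp
      then show ?thesis using keyE[OF s] by blast
    next
      case True
      then have "w \<noteq> 0" using ne by (auto simp: v_def w_def)
      then have "w / yt s \<noteq> 0" using yt01[OF s] by simp
      moreover have "Kd s = 0" "Kdd s = 0" using True by (auto simp: Kd_def Kdd_def)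
      ultimately show ?thesis using keyE[OF s] by blast
    qed
  qed
  show ?thesis using conv strict e0 e1 et by auto
qed

theorem lemma2p13:
  fixes X :: "(real^'n) set" and S :: "(real^'n) set"
    and \<kappa> :: "real^'n \<Rightarrow> real"
    and grad\<kappa> :: "real^'n \<Rightarrow> real^'n"
    and hess\<kappa> :: "real^'n \<Rightarrow> real^'n^'n"
    and p d :: real
  assumes X_closed: "closed X" and X_convex: "convex X" and X_0: "0 \<notin> X"
    and p_range: "exp (-1) \<le> p" "p < 1"
    and S_open: "open S" and X_S: "X \<subseteq> S"
    and grad: "\<And>x. x \<in> S \<Longrightarrow> (\<kappa> has_derivative (\<lambda>h. grad\<kappa> x \<bullet> h)) (at x)"
    and hess: "\<And>x. x \<in> S \<Longrightarrow> (grad\<kappa> has_derivative (\<lambda>h. hess\<kappa> x *v h)) (at x)"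
    and \<kappa>_range: "\<And>x. x \<in> X \<Longrightarrow> 0 < \<kappa> x \<and> \<kappa> x \<le> 1"
    and d_pos: "d > 0"
    and d_bound: "\<And>x y. x \<in> X \<Longrightarrow> 0 < y \<Longrightarrow> y < 1 \<Longrightarrow>
                    1 / omega p (\<kappa> x) y \<ge> d * \<kappa> x"
    and psd: "\<And>x. x \<in> X \<Longrightarrow>
                psd_mat ((d * \<kappa> x) *\<^sub>R hess\<kappa> x - outer_prod (grad\<kappa> x) (grad\<kappa> x))"
  shows "convex_on (X \<times> {0<..<1}) (\<lambda>(x, y). Ufun p (\<kappa> x) y) \<and>
         ((\<forall>x\<in>X. pd_mat ((d * \<kappa> x) *\<^sub>R hess\<kappa> x - outer_prod (grad\<kappa> x) (grad\<kappa> x)))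
         \<longrightarrow> strict_convex_on (X \<times> {0<..<1}) (\<lambda>(x, y). Ufun p (\<kappa> x) y))"
proof -
  note SC = seg_claim[OF X_convex p_range X_S grad hess \<kappa>_range d_pos d_bound psd]
  have cvx: "convex (X \<times> {0<..<(1::real)})"
    by (intro convex_Times X_convex convex_real_interval)
  have A: "convex_on (X \<times> {0<..<1}) (\<lambda>(x, y). Ufun p (\<kappa> x) y)"
  proof (rule convex_onI[OF _ cvx])
    fix t :: real and z0 z1 :: "(real^'n) \<times> real"
    assume t: "0 < t" "t < 1" and z0: "z0 \<in> X \<times> {0<..<1}" and z1: "z1 \<in> X \<times> {0<..<1}"
    obtain x0 y0 x1 y1 where zz: "z0 = (x0, y0)" "z1 = (x1, y1)" by fastforce
    show "(\<lambda>(x, y). Ufun p (\<kappa> x) y) ((1 - t) *\<^sub>R z0 + t *\<^sub>R z1)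
          \<le> (1 - t) * (\<lambda>(x, y). Ufun p (\<kappa> x) y) z0 + t * (\<lambda>(x, y). Ufun p (\<kappa> x) y) z1"
      using SC[of x0 x1 y0 y1 t] z0 z1 t unfolding zz by auto
  qed
  have B: "strict_convex_on (X \<times> {0<..<1}) (\<lambda>(x, y). Ufun p (\<kappa> x) y)"
    if pd: "\<forall>x\<in>X. pd_mat ((d * \<kappa> x) *\<^sub>R hess\<kappa> x - outer_prod (grad\<kappa> x) (grad\<kappa> x))"
    unfolding strict_convex_on_def
  proof (intro conjI cvx ballI allI impI)
    fix t :: real and z0 z1 :: "(real^'n) \<times> real"
    assume z0: "z0 \<in> X \<times> {0<..<1}" and z1: "z1 \<in> X \<times> {0<..<1}" and ne: "z0 \<noteq> z1"
      and t: "0 < t" "t < 1"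
    obtain x0 y0 x1 y1 where zz: "z0 = (x0, y0)" "z1 = (x1, y1)" by fastforce
    show "(\<lambda>(x, y). Ufun p (\<kappa> x) y) ((1 - t) *\<^sub>R z0 + t *\<^sub>R z1)
          < (1 - t) * (\<lambda>(x, y). Ufun p (\<kappa> x) y) z0 + t * (\<lambda>(x, y). Ufun p (\<kappa> x) y) z1"
      using SC[of x0 x1 y0 y1 t] z0 z1 t pd ne unfolding zz by auto
  qed
  show ?thesis using A B by blast
qed

end
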